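(* Let $p$ be a prime and $n$ a positive integer, let $T_n(\mathbf{Q}_p)$ be the ring of upper-triangular $n\times n$ matrices over $\mathbf{Q}_p$, and for $A=\{a_{j,k}\}\in T_n(\mathbf{Q}_p)$ put $$N(A)=\max_{1\le j<k\le n}|a_{j,k}|_p^{1/(k-j)}.$$ For $r\in\mathbf{Q}_p$ let $\delta_r(A)$ be the matrix whose $(j,k)$ entry is $r^{k-j}a_{j,k}$ for $j<k$, $a_{j,j}$ for $j=k$, and $0$ for $j>k$. Then $N(A+A')\le\max(N(A),N(A'))$ and $N(\delta_r(A))=|r|_pN(A)$ for all $A,A'\in T_n(\mathbf{Q}_p)$, $r\in\mathbf{Q}_p$; and if $A,A'\in T_n(\mathbf{Q}_p)$ have all their diagonal entries in $\mathbf{Z}_p$, then $N(AA')\le\max(N(A),N(A'))$.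
   Context: $|\cdot|_p$ is the $p$-adic absolute value on $\mathbf{Q}_p$, and $\mathbf{Z}_p=\{x\in\mathbf{Q}_p:|x|_p\le1\}$. For $n=1$ the maximum over an empty set is taken to be $0$. *)

theory Defs
  imports "HOL-Computational_Algebra.Computational_Algebra" Complex_Main
begin

definition padic_abs_rat :: "nat \<Rightarrow> rat \<Rightarrow> real" where
  "padic_abs_rat p q =
     (if q = 0 then 0
      else (let (a, b) = quotient_of q
            in real p powr (- (real (multiplicity (int p) a) - real (multiplicity (int p) b)))))"

text \<open>Characterisation of (a model of) the field Q_p together with its absolute value
  |.|_p: a field of characteristic 0 with a multiplicative, ultrametric absolute value
  restricting to the p-adic absolute value on Q, complete, and in which Q is dense.
  Such a pair is unique up to isometric isomorphism, namely Q_p.\<close>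
definition is_Qp :: "nat \<Rightarrow> ('a::field_char_0 \<Rightarrow> real) \<Rightarrow> bool" where
  "is_Qp p av \<longleftrightarrow>
     (\<forall>x. av x \<ge> 0 \<and> (av x = 0 \<longleftrightarrow> x = 0)) \<and>
     (\<forall>x y. av (x * y) = av x * av y) \<and>
     (\<forall>x y. av (x + y) \<le> max (av x) (av y)) \<and>
     (\<forall>q. av (of_rat q) = padic_abs_rat p q) \<and>
     (\<forall>X::nat \<Rightarrow> 'a. (\<forall>e>0. \<exists>M. \<forall>m\<ge>M. \<forall>k\<ge>M. av (X m - X k) < e)
         \<longrightarrow> (\<exists>L. \<forall>e>0. \<exists>M. \<forall>m\<ge>M. av (X m - L) < e)) \<and>
     (\<forall>x. \<forall>e>0. \<exists>q. av (x - of_rat q) < e)"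

text \<open>n x n matrices are functions nat => nat => 'a, indexed by 1..n, with all
  entries outside {1..n} x {1..n} equal to 0.  T_n = upper-triangular ones.\<close>
definition upper_tri :: "nat \<Rightarrow> (nat \<Rightarrow> nat \<Rightarrow> 'a::zero) set" where
  "upper_tri n = {A. \<forall>j k. (j \<notin> {1..n} \<or> k \<notin> {1..n} \<or> j > k) \<longrightarrow> A j k = 0}"

definition mat_add :: "(nat \<Rightarrow> nat \<Rightarrow> 'a::plus) \<Rightarrow> (nat \<Rightarrow> nat \<Rightarrow> 'a) \<Rightarrow> nat \<Rightarrow> nat \<Rightarrow> 'a" where
  "mat_add A B = (\<lambda>j k. A j k + B j k)"

definition mat_mul :: "nat \<Rightarrow> (nat \<Rightarrow> nat \<Rightarrow> 'a::comm_semiring_0) \<Rightarrow> (nat \<Rightarrow> nat \<Rightarrow> 'a) \<Rightarrow> nat \<Rightarrow> nat \<Rightarrow> 'a" where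
  "mat_mul n A B = (\<lambda>j k. \<Sum>l\<in>{1..n}. A j l * B l k)"

text \<open>N(A) = max_{1<=j<k<=n} |a_{jk}|^(1/(k-j)); the maximum over the empty set
  (n = 1) is 0.  Since all values are >= 0, inserting 0 realises this convention.\<close>
definition Nnorm :: "('a \<Rightarrow> real) \<Rightarrow> nat \<Rightarrow> (nat \<Rightarrow> nat \<Rightarrow> 'a) \<Rightarrow> real" where
  "Nnorm av n A = Max (insert 0 {root (k - j) (av (A j k)) | j k. 1 \<le> j \<and> j < k \<and> k \<le> n})"

definition delta :: "nat \<Rightarrow> 'a::comm_ring_1 \<Rightarrow> (nat \<Rightarrow> nat \<Rightarrow> 'a) \<Rightarrow> nat \<Rightarrow> nat \<Rightarrow> 'a" where
  "delta n r A = (\<lambda>j k. if j \<in> {1..n} \<and> k \<in> {1..n} then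
                          (if j < k then r ^ (k - j) * A j k else if j = k then A j j else 0)
                        else 0)"

end

theory Submission
  imports Defs
begin

lemma root_le_iff_pow: "0 < m \<Longrightarrow> 0 \<le> c \<Longrightarrow> 0 \<le> x \<Longrightarrow> (root m x \<le> c) = (x \<le> c ^ m)"
  by (metis real_root_le_iff real_root_pos_unique)

lemma Nset_finite: "finite {root (k - j) (av (A j k)) | j k. 1 \<le> j \<and> j < k \<and> k \<le> (n::nat)}"
proof -
  have "{root (k - j) (av (A j k)) | j k. 1 \<le> j \<and> j < k \<and> k \<le> n}
        \<subseteq> (\<lambda>(j,k). root (k - j) (av (A j k))) ` ({..n} \<times> {..n})" by auto
  thus ?thesis by (rule finite_subset) auto
qed

lemma Nnorm_nonneg: "0 \<le> Nnorm av n A"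
  unfolding Nnorm_def by (rule Max_ge[OF finite.insertI[OF Nset_finite]]) simp

lemma Nnorm_le:
  fixes av :: "'a \<Rightarrow> real" and A :: "nat \<Rightarrow> nat \<Rightarrow> 'a"
  assumes nn: "\<And>x. av x \<ge> 0" and c: "0 \<le> c"
    and h: "\<And>j k. 1 \<le> j \<Longrightarrow> j < k \<Longrightarrow> k \<le> n \<Longrightarrow> av (A j k) \<le> c ^ (k - j)"
  shows "Nnorm av n A \<le> c"
  unfolding Nnorm_def
proof (rule Max.boundedI)
  show "finite (insert 0 {root (k - j) (av (A j k)) | j k. 1 \<le> j \<and> j < k \<and> k \<le> n})"
    by (rule finite.insertI[OF Nset_finite])
  fix a assume "a \<in> insert 0 {root (k - j) (av (A j k)) | j k. 1 \<le> j \<and> j < k \<and> k \<le> n}"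
  then show "a \<le> c"
  proof
    assume "a = 0" thus ?thesis using c by simp
  next
    assume "a \<in> {root (k - j) (av (A j k)) | j k. 1 \<le> j \<and> j < k \<and> k \<le> n}"
    then obtain j k where a: "a = root (k - j) (av (A j k))" "1 \<le> j" "j < k" "k \<le> n" by auto
    thus ?thesis using root_le_iff_pow[of "k-j" c "av (A j k)"] h[of j k] c nn by auto
  qed
qed auto

lemma Nnorm_ge:
  fixes av :: "'a \<Rightarrow> real" and A :: "nat \<Rightarrow> nat \<Rightarrow> 'a"
  assumes nn: "\<And>x. av x \<ge> 0" and jk: "1 \<le> j" "j < k" "k \<le> n"
  shows "av (A j k) \<le> Nnorm av n A ^ (k - j)"
proof -
  have "root (k - j) (av (A j k)) \<le> Nnorm av n A"
    unfolding Nnorm_def by (rule Max_ge[OF finite.insertI[OF Nset_finite]]) (use jk in auto)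
  thus ?thesis using root_le_iff_pow[of "k-j" "Nnorm av n A" "av (A j k)"] Nnorm_nonneg nn jk
    by auto
qed

lemma ultra_sum:
  fixes av :: "'a::comm_monoid_add \<Rightarrow> real"
  assumes nn: "\<And>x. av x \<ge> 0" and z: "av 0 = 0"
    and um: "\<And>x y. av (x + y) \<le> max (av x) (av y)"
    and B: "0 \<le> B" and h: "\<And>i. i \<in> S \<Longrightarrow> av (f i) \<le> B" and fin: "finite S"
  shows "av (sum f S) \<le> B"
  using fin h
proof (induction S rule: finite_induct)
  case empty thus ?case using z B by simp
next
  case (insert x F)
  have "av (sum f (insert x F)) = av (f x + sum f F)" using insert by simp
  also have "\<dots> \<le> max (av (f x)) (av (sum f F))" by (rule um)
  also have "\<dots> \<le> B"
  proof -
    have "av (f x) \<le> B" using insert.prems by simp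
    moreover have "av (sum f F) \<le> B" using insert.IH insert.prems by simp
    ultimately show ?thesis by (rule max.boundedI)
  qed
  finally show ?case .
qed

theorem mainTheorem4:
  fixes p n :: nat and av :: "'a::field_char_0 \<Rightarrow> real"
  assumes "prime p" and "n \<ge> 1" and "is_Qp p av"
  shows "(\<forall>A\<in>upper_tri n. \<forall>A'\<in>upper_tri n.
            Nnorm av n (mat_add A A') \<le> max (Nnorm av n A) (Nnorm av n A'))
     \<and> (\<forall>A\<in>upper_tri n. \<forall>r.
            Nnorm av n (delta n r A) = av r * Nnorm av n A)
     \<and> (\<forall>A\<in>upper_tri n. \<forall>A'\<in>upper_tri n.
            (\<forall>j\<in>{1..n}. av (A j j) \<le> 1) \<longrightarrow> (\<forall>j\<in>{1..n}. av (A' j j) \<le> 1) \<longrightarrow>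
            Nnorm av n (mat_mul n A A') \<le> max (Nnorm av n A) (Nnorm av n A'))"
proof -
  have nn: "\<And>x. av x \<ge> 0" and z0: "\<And>x. av x = 0 \<longleftrightarrow> x = 0"
    and mul: "\<And>x y. av (x * y) = av x * av y"
    and um: "\<And>x y. av (x + y) \<le> max (av x) (av y)"
    using assms(3) unfolding is_Qp_def by auto
  have z: "av 0 = 0" using z0 by simp
  have avpow: "\<And>x m. av (x ^ m) = av x ^ m"
  proof -
    fix x :: 'a and m :: nat
    have e: "av (1::'a) = av 1 * av 1" using mul[of "1::'a" "1::'a"] by simp
    have ne: "av (1::'a) \<noteq> 0" using z0[of "1::'a"] by simp
    from e have "av (1::'a) * (av 1 - 1) = 0" by (simp add: algebra_simps)
    with ne have "av (1::'a) = 1" by simp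
    thus "av (x ^ m) = av x ^ m" by (induction m) (auto simp: mul)
  qed
  have P1: "Nnorm av n (mat_add A A') \<le> max (Nnorm av n A) (Nnorm av n A')" for A A'
  proof (rule Nnorm_le[where av=av, OF nn])
    show "0 \<le> max (Nnorm av n A) (Nnorm av n A')" using Nnorm_nonneg by (auto simp: le_max_iff_disj)
    fix j k assume jk: "1 \<le> j" "j < k" "k \<le> n"
    have "av (mat_add A A' j k) \<le> max (av (A j k)) (av (A' j k))" unfolding mat_add_def by (rule um)
    also have "\<dots> \<le> max (Nnorm av n A ^ (k-j)) (Nnorm av n A' ^ (k-j))"
      using Nnorm_ge[where av=av, OF nn jk, where A=A] Nnorm_ge[where av=av, OF nn jk, where A=A'] by auto
    also have "\<dots> \<le> max (Nnorm av n A) (Nnorm av n A') ^ (k-j)"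
      by (auto intro: power_mono simp: Nnorm_nonneg)
    finally show "av (mat_add A A' j k) \<le> max (Nnorm av n A) (Nnorm av n A') ^ (k-j)" .
  qed
  have P2: "Nnorm av n (delta n r A) = av r * Nnorm av n A" for A r
  proof (rule antisym)
    show "Nnorm av n (delta n r A) \<le> av r * Nnorm av n A"
    proof (rule Nnorm_le[where av=av, OF nn])
      show "0 \<le> av r * Nnorm av n A" using nn[of r] Nnorm_nonneg[of av n A] by simp
      fix j k assume jk: "1 \<le> j" "j < k" "k \<le> n"
      have "av (delta n r A j k) = av r ^ (k-j) * av (A j k)"
        using jk by (simp add: delta_def mul avpow)
      also have "\<dots> \<le> av r ^ (k-j) * Nnorm av n A ^ (k-j)"
        using Nnorm_ge[where av=av, OF nn jk, where A=A] nn by (simp add: mult_left_mono)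
      finally show "av (delta n r A j k) \<le> (av r * Nnorm av n A) ^ (k-j)"
        by (simp add: power_mult_distrib)
    qed
  next
    show "av r * Nnorm av n A \<le> Nnorm av n (delta n r A)"
    proof (cases "av r = 0")
      case True thus ?thesis using Nnorm_nonneg by simp
    next
      case False
      hence pos: "av r > 0" using nn by (simp add: order_less_le)
      have "Nnorm av n A \<le> Nnorm av n (delta n r A) / av r"
      proof (rule Nnorm_le[where av=av, OF nn])
        show "0 \<le> Nnorm av n (delta n r A) / av r" using Nnorm_nonneg[of av n "delta n r A"] pos by simp
        fix j k assume jk: "1 \<le> j" "j < k" "k \<le> n"
        have e: "av (delta n r A j k) = av r ^ (k-j) * av (A j k)"
          using jk by (simp add: delta_def mul avpow)
        have "av r ^ (k-j) * av (A j k) \<le> Nnorm av n (delta n r A) ^ (k-j)"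
          using Nnorm_ge[where av=av, OF nn jk, where A="delta n r A"] e by simp
        hence "av (A j k) \<le> Nnorm av n (delta n r A) ^ (k-j) / av r ^ (k-j)"
          using pos by (simp add: field_simps)
        thus "av (A j k) \<le> (Nnorm av n (delta n r A) / av r) ^ (k-j)"
          by (simp add: power_divide)
      qed
      thus ?thesis using pos by (simp add: field_simps)
    qed
  qed
  have P3: "Nnorm av n (mat_mul n A A') \<le> max (Nnorm av n A) (Nnorm av n A')"
    if A: "A \<in> upper_tri n" and A': "A' \<in> upper_tri n"
      and dA: "\<forall>j\<in>{1..n}. av (A j j) \<le> 1" and dA': "\<forall>j\<in>{1..n}. av (A' j j) \<le> 1" for A A'
  proof (rule Nnorm_le[where av=av, OF nn])
    define M where "M = max (Nnorm av n A) (Nnorm av n A')"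
    have M0: "0 \<le> M" unfolding M_def using Nnorm_nonneg by (auto simp: le_max_iff_disj)
    show "0 \<le> max (Nnorm av n A) (Nnorm av n A')" using M0 M_def by simp
    fix j k assume jk: "1 \<le> j" "j < k" "k \<le> n"
    have bA: "av (A a b) \<le> M ^ (b - a)" if "1 \<le> a" "a \<le> b" "b \<le> n" for a b
    proof (cases "a = b")
      case True thus ?thesis using dA that by auto
    next
      case False
      hence "av (A a b) \<le> Nnorm av n A ^ (b - a)" using Nnorm_ge[where av=av and A=A, OF nn, of a b n] that by auto
      also have "\<dots> \<le> M ^ (b - a)" unfolding M_def by (rule power_mono) (auto simp: Nnorm_nonneg)
      finally show ?thesis .
    qed
    have bA': "av (A' a b) \<le> M ^ (b - a)" if "1 \<le> a" "a \<le> b" "b \<le> n" for a b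
    proof (cases "a = b")
      case True thus ?thesis using dA' that by auto
    next
      case False
      hence "av (A' a b) \<le> Nnorm av n A' ^ (b - a)" using Nnorm_ge[where av=av and A=A', OF nn, of a b n] that by auto
      also have "\<dots> \<le> M ^ (b - a)" unfolding M_def by (rule power_mono) (auto simp: Nnorm_nonneg)
      finally show ?thesis .
    qed
    have "av (mat_mul n A A' j k) \<le> M ^ (k - j)"
      unfolding mat_mul_def
    proof (rule ultra_sum[where av=av, OF nn z um])
      show "0 \<le> M ^ (k - j)" using M0 by simp
      fix l assume l: "l \<in> {1..n}"
      show "av (A j l * A' l k) \<le> M ^ (k - j)"
      proof (cases "j \<le> l \<and> l \<le> k")
        case True
        have "av (A j l * A' l k) = av (A j l) * av (A' l k)" by (rule mul)
        also have "\<dots> \<le> M ^ (l - j) * M ^ (k - l)"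
          using bA[of j l] bA'[of l k] True jk l nn M0 by (intro mult_mono) auto
        also have "\<dots> = M ^ (k - j)" using True by (simp flip: power_add)
        finally show ?thesis .
      next
        case False
        hence "A j l = 0 \<or> A' l k = 0" using A A' unfolding upper_tri_def by auto
        thus ?thesis using z M0 by auto
      qed
    qed simp
    thus "av (mat_mul n A A' j k) \<le> max (Nnorm av n A) (Nnorm av n A') ^ (k - j)"
      using M_def by simp
  qed
  show ?thesis using P1 P2 P3 by blast
qed

end
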